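(* Let $n,k$ be integers with $8\le 2k\le n-2$ and let $\lambda\in\overline{\mathcal{U}}_{T_{n,n-2k+1}}$. Then the Young diagram $\mathrm{KN}(S_\lambda)$ has exactly $2n-4+2k$ cells; consequently the sum of the hook lengths of the cells on its main diagonal is $2n-4+2k$.
   Context: A partition of $N$ into distinct parts is a sequence $\lambda=(\lambda_1<\dots<\lambda_t)$ of positive integers with sum $N$ and $t\ge 2$, identified with its set of parts. Missing parts: $\mathcal{M}_\lambda=\{1,\dots,\lambda_t\}\setminus\lambda$. $\lambda$ is refinable if two distinct missing parts sum to a part of $\lambda$, unrefinable otherwise; $\mathcal{U}_N$ is the set of unrefinable partitions of $N$. An element of $\mathcal{U}_N$ is maximal if its largest part is the maximum of the largest parts of elements of $\mathcal{U}_N$; $\widetilde{\mathcal{U}}_N$ is the set of these and $\overline{\mathcal{U}}_N=\{\lambda\in\widetilde{\mathcal{U}}_N:\#\mathcal{M}_\lambda=\lfloor\lambda_t/2\rfloor\}$. $T_n=n(n+1)/2$, $T_{n,d}=T_n-d$. $S_\lambda=\mathbb{N}_0\setminus\lambda$. The Keith–Nath transformation sends a set $S\subseteq\mathbb{N}_0$ with $0\in S$ and finite complement to the Young diagram $\mathrm{KN}(S)$ whose boundary is the lattice path that, starting at the origin, takes for $j=0,1,\dots,\max(\mathbb{N}_0\setminus S)$ an east step if $j\in S$ and a north step otherwise. Hook length of a cell = (cells to its right in its row) + (cells below it in its column) + 1; the main diagonal consists of the cells in row $i$, column $i$. *)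

theory Defs
  imports Main
begin

text \<open>Partitions of N into distinct parts, identified with their (finite) set of positive parts.\<close>
definition distinct_partition :: "nat \<Rightarrow> nat set \<Rightarrow> bool" where
  "distinct_partition N lam \<longleftrightarrow> finite lam \<and> 0 \<notin> lam \<and> \<Sum>lam = N \<and> card lam \<ge> 2"

definition missing_parts :: "nat set \<Rightarrow> nat set" where
  "missing_parts lam = {1..Max lam} - lam"

definition refinable :: "nat set \<Rightarrow> bool" where
  "refinable lam \<longleftrightarrow>
     (\<exists>a b. a \<in> missing_parts lam \<and> b \<in> missing_parts lam \<and> a \<noteq> b \<and> a + b \<in> lam)"

definition unrefinable_parts :: "nat \<Rightarrow> nat set set" where
  "unrefinable_parts N = {lam. distinct_partition N lam \<and> \<not> refinable lam}"

definition maximal_unrefinable :: "nat \<Rightarrow> nat set set" where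
  "maximal_unrefinable N =
     {lam \<in> unrefinable_parts N. Max lam = (MAX mu \<in> unrefinable_parts N. Max mu)}"

definition maximal_unrefinable_bar :: "nat \<Rightarrow> nat set set" where
  "maximal_unrefinable_bar N =
     {lam \<in> maximal_unrefinable N. card (missing_parts lam) = Max lam div 2}"

definition T :: "nat \<Rightarrow> nat" where
  "T n = n * (n + 1) div 2"

definition Tnd :: "nat \<Rightarrow> nat \<Rightarrow> nat" where
  "Tnd n d = T n - d"

definition S_of :: "nat set \<Rightarrow> nat set" where
  "S_of lam = UNIV - lam"

text \<open>The lattice path takes, for j = 0..max gap, an east step
  if j is in S and a north step otherwise.  The north step produced by the gap g lies at
  x-coordinate card {s in S. s < g}, so the row of the Young diagram bounded by that north
  step has exactly that many cells.  We use English convention: row 0 (top) corresponds to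
  the largest gap, row i to the (i+1)-th largest gap.  Cells are pairs (row, column).\<close>
definition kn_gaps :: "nat set \<Rightarrow> nat list" where
  "kn_gaps S = rev (sorted_list_of_set (UNIV - S))"

definition kn_row :: "nat set \<Rightarrow> nat \<Rightarrow> nat" where
  "kn_row S i = card {s \<in> S. s < kn_gaps S ! i}"

definition KN :: "nat set \<Rightarrow> (nat \<times> nat) set" where
  "KN S = {(i, j). i < length (kn_gaps S) \<and> j < kn_row S i}"

definition hook_length :: "(nat \<times> nat) set \<Rightarrow> nat \<times> nat \<Rightarrow> nat" where
  "hook_length D c =
     card {j'. (fst c, j') \<in> D \<and> snd c < j'} + card {i'. (i', snd c) \<in> D \<and> fst c < i'} + 1"

definition main_diagonal :: "(nat \<times> nat) set \<Rightarrow> (nat \<times> nat) set" where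
  "main_diagonal D = {c \<in> D. fst c = snd c}"

end

theory Submission
  imports Defs
begin


lemma hook_sum:
  fixes R :: nat and r :: "nat \<Rightarrow> nat"
  assumes mono: "\<And>i i'. i \<le> i' \<Longrightarrow> i' < R \<Longrightarrow> r i' \<le> r i"
    and D: "D = {(i,j). i < R \<and> j < r i}"
  shows "(\<Sum>c\<in>main_diagonal D. hook_length D c) = card D"
proof -
  have finD: "finite D"
  proof -
    have "D \<subseteq> {..<R} \<times> {..<r 0}"
      using mono by (auto simp: D) (metis le0 less_le_trans not_less)
    then show ?thesis by (rule finite_subset) auto
  qed
  have finM: "finite (main_diagonal D)" using finD unfolding main_diagonal_def by auto
  define g where "g = (\<lambda>x::nat\<times>nat. (min (fst x) (snd x), min (fst x) (snd x)))"
  have gD: "g ` D \<subseteq> main_diagonal D"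
  proof
    fix y assume "y \<in> g ` D"
    then obtain a b where ab: "(a,b) \<in> D" "y = g (a,b)" by auto
    then have "a < R" "b < r a" by (auto simp: D)
    show "y \<in> main_diagonal D"
    proof (cases "a \<le> b")
      case True
      then show ?thesis using ab \<open>a < R\<close> \<open>b < r a\<close> by (auto simp: g_def main_diagonal_def D)
    next
      case False
      then have "r a \<le> r b" using mono[of b a] \<open>a < R\<close> by auto
      then show ?thesis using ab \<open>a < R\<close> \<open>b < r a\<close> False by (auto simp: g_def main_diagonal_def D)
    qed
  qed
  have "card D = (\<Sum>x\<in>D. 1)" by simp
  also have "\<dots> = (\<Sum>y\<in>main_diagonal D. \<Sum>x\<in>{x. x \<in> D \<and> g x = y}. 1)"
    using sum.group[OF finD finM gD, of "\<lambda>_. (1::nat)"] by simp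
  also have "\<dots> = (\<Sum>y\<in>main_diagonal D. hook_length D y)"
  proof (rule sum.cong)
    fix c assume c: "c \<in> main_diagonal D"
    then obtain m where cm: "c = (m,m)" "(m,m) \<in> D" by (auto simp: main_diagonal_def) (metis prod.collapse)
    define A where "A = {j'. (m, j') \<in> D \<and> m < j'}"
    define B where "B = {i'. (i', m) \<in> D \<and> m < i'}"
    have finA: "finite A" unfolding A_def
      by (rule finite_subset[of _ "snd ` D"]) (force, simp add: finD)
    have finB: "finite B" unfolding B_def
      by (rule finite_subset[of _ "fst ` D"]) (force, simp add: finD)
    have eq: "{x. x \<in> D \<and> g x = c} = insert (m,m) ((\<lambda>j. (m,j)) ` A \<union> (\<lambda>i. (i,m)) ` B)"
      using cm by (auto simp: g_def A_def B_def min_def split: if_splits)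
    have "card {x. x \<in> D \<and> g x = c} = Suc (card ((\<lambda>j. (m,j)) ` A \<union> (\<lambda>i. (i,m)) ` B))"
      unfolding eq apply (rule card_insert_disjoint) using finA finB apply simp by (auto simp: A_def B_def)
    also have "card ((\<lambda>j. (m,j)) ` A \<union> (\<lambda>i. (i,m)) ` B) = card ((\<lambda>j. (m,j)) ` A) + card ((\<lambda>i. (i,m)) ` B)"
      apply (rule card_Un_disjoint) using finA finB apply simp_all by (auto simp: A_def B_def)
    also have "card ((\<lambda>j. (m,j)) ` A) = card A" by (rule card_image) (auto simp: inj_on_def)
    also have "card ((\<lambda>i. (i,m)) ` B) = card B" by (rule card_image) (auto simp: inj_on_def)
    finally show "(\<Sum>x\<in>{x. x \<in> D \<and> g x = c}. 1) = hook_length D c"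
      by (simp add: hook_length_def cm A_def B_def)
  qed simp
  finally show ?thesis by simp
qed



lemma F_formula:
  fixes A :: "nat set"
  shows "finite A \<Longrightarrow> 2 * (\<Sum>g\<in>A. card {s. s \<notin> A \<and> s < g}) + card A * (card A - 1) = 2 * \<Sum>A"
proof (induction "card A" arbitrary: A)
  case 0
  then show ?case by simp
next
  case (Suc m)
  then have ne: "A \<noteq> {}" by auto
  define x where "x = Max A"
  define A' where "A' = A - {x}"
  have xA: "x \<in> A" using Suc.prems ne by (simp add: x_def)
  have cA': "card A' = m" using Suc.hyps(2) xA Suc.prems by (simp add: A'_def)
  have fA': "finite A'" using Suc.prems by (simp add: A'_def)
  have less: "\<And>y. y \<in> A' \<Longrightarrow> y < x"
    using Suc.prems by (auto simp: A'_def x_def) (meson Max_ge le_neq_implies_less)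
  have Aeq: "A = insert x A'" using xA by (auto simp: A'_def)
  have xA': "x \<notin> A'" by (simp add: A'_def)
  have IH: "2 * (\<Sum>g\<in>A'. card {s. s \<notin> A' \<and> s < g}) + m * (m - 1) = 2 * \<Sum>A'"
    using Suc.hyps(1)[OF cA'[symmetric] fA'] cA' by simp
  have s1: "(\<Sum>g\<in>A'. card {s. s \<notin> A \<and> s < g}) = (\<Sum>g\<in>A'. card {s. s \<notin> A' \<and> s < g})"
  proof (rule sum.cong)
    fix g assume "g \<in> A'"
    then have "g < x" by (rule less)
    then have "{s. s \<notin> A \<and> s < g} = {s. s \<notin> A' \<and> s < g}" using Aeq by auto
    then show "card {s. s \<notin> A \<and> s < g} = card {s. s \<notin> A' \<and> s < g}" by simp
  qed simp
  have s2: "{s. s \<notin> A \<and> s < x} = {..<x} - A'" using Aeq by auto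
  have sub: "A' \<subseteq> {..<x}" using less by auto
  have c2: "card {s. s \<notin> A \<and> s < x} = x - m"
    unfolding s2 using card_Diff_subset[OF fA' sub] cA' by simp
  have mx: "m \<le> x" using card_mono[OF _ sub] cA' by simp
  have "(\<Sum>g\<in>A. card {s. s \<notin> A \<and> s < g}) = card {s. s \<notin> A \<and> s < x} + (\<Sum>g\<in>A'. card {s. s \<notin> A \<and> s < g})"
    using Aeq fA' xA' by simp
  moreover have "\<Sum>A = x + \<Sum>A'" using Aeq fA' xA' by simp
  moreover have "card A = Suc m" using Suc.hyps(2) by simp
  ultimately show ?case using IH s1 c2 mx
    by (cases m) (auto simp: algebra_simps)
qed

lemma kn_card:
  fixes lam :: "nat set"
  assumes fin: "finite lam"
  shows "2 * card (KN (S_of lam)) + card lam * (card lam - 1) = 2 * \<Sum>lam"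
proof -
  define xs where "xs = rev (sorted_list_of_set lam)"
  have U: "UNIV - S_of lam = lam" by (auto simp: S_of_def)
  have gaps: "kn_gaps (S_of lam) = xs" by (simp add: kn_gaps_def U xs_def)
  define f where "f = (\<lambda>g. card {s. s \<notin> lam \<and> s < g})"
  have row: "kn_row (S_of lam) i = f (xs ! i)" for i
    unfolding kn_row_def gaps f_def by (simp add: S_of_def)
  have KNeq: "KN (S_of lam) = Sigma {..<length xs} (\<lambda>i. {..<f (xs ! i)})"
    by (auto simp: KN_def gaps row)
  have "card (KN (S_of lam)) = (\<Sum>i<length xs. f (xs ! i))"
    unfolding KNeq by (simp add: card_SigmaI)
  also have "\<dots> = sum_list (map f xs)"
    by (simp add: sum_list_sum_nth atLeast0LessThan)
  also have "\<dots> = sum f lam"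
    using fin by (simp add: sum_list_distinct_conv_sum_set xs_def)
  finally show ?thesis using F_formula[OF fin] by (simp add: f_def)
qed

lemma kn_mono:
  fixes lam :: "nat set"
  assumes fin: "finite lam"
  shows "KN (S_of lam) = {(i,j). i < length (kn_gaps (S_of lam)) \<and> j < kn_row (S_of lam) i}"
    and "\<And>i i'. i \<le> i' \<Longrightarrow> i' < length (kn_gaps (S_of lam)) \<Longrightarrow> kn_row (S_of lam) i' \<le> kn_row (S_of lam) i"
proof -
  show "KN (S_of lam) = {(i,j). i < length (kn_gaps (S_of lam)) \<and> j < kn_row (S_of lam) i}"
    by (simp add: KN_def)
  fix i i' assume ii: "i \<le> i'" "i' < length (kn_gaps (S_of lam))"
  define ys where "ys = sorted_list_of_set lam"
  have U: "UNIV - S_of lam = lam" by (auto simp: S_of_def)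
  have gaps: "kn_gaps (S_of lam) = rev ys" by (simp add: kn_gaps_def U ys_def)
  have le: "rev ys ! i' \<le> rev ys ! i"
    using ii by (simp add: gaps rev_nth ys_def sorted_nth_mono)
  show "kn_row (S_of lam) i' \<le> kn_row (S_of lam) i"
    unfolding kn_row_def gaps
    by (rule card_mono) (use le in auto)
qed



lemma sum_lb:
  fixes A :: "nat set"
  shows "finite A \<Longrightarrow> 0 \<notin> A \<Longrightarrow> card A * (card A + 1) \<le> 2 * \<Sum>A"
proof (induction "card A" arbitrary: A)
  case 0
  then show ?case by simp
next
  case (Suc m)
  then have ne: "A \<noteq> {}" by auto
  define x where "x = Max A"
  define A' where "A' = A - {x}"
  have xA: "x \<in> A" using Suc.prems ne by (simp add: x_def)
  have cA': "card A' = m" using Suc.hyps(2) xA Suc.prems by (simp add: A'_def)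
  have fA': "finite A'" using Suc.prems by (simp add: A'_def)
  have IH: "m * (m + 1) \<le> 2 * \<Sum>A'"
    using Suc.hyps(1)[OF cA'[symmetric] fA'] cA' Suc.prems by (simp add: A'_def)
  have sub: "A \<subseteq> {1..x}" using Suc.prems by (auto simp: x_def) (metis Suc_leI not_gr0)
  have "Suc m \<le> x" using card_mono[OF _ sub] Suc.hyps(2) by simp
  moreover have "\<Sum>A = x + \<Sum>A'" using Suc.prems xA by (simp add: A'_def sum_diff1_nat)
    (metis add.commute le_add_diff_inverse member_le_sum zero_le)
  ultimately show ?case using IH Suc.hyps(2)[symmetric] by (simp add: algebra_simps)
qed

lemma missing_card:
  assumes dp: "distinct_partition N mu" and nr: "\<not> refinable mu"
  shows "card (missing_parts mu) \<le> Max mu div 2"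
    and "card mu + card (missing_parts mu) = Max mu"
proof -
  define L where "L = Max mu"
  have fin: "finite mu" and z: "0 \<notin> mu" and c2: "card mu \<ge> 2" using dp by (auto simp: distinct_partition_def)
  have ne: "mu \<noteq> {}" using c2 by auto
  have LL: "L \<in> mu" using fin ne by (simp add: L_def)
  have sub: "mu \<subseteq> {1..L}" using fin z by (auto simp: L_def) (metis Suc_leI not_gr0)
  have M: "missing_parts mu = {1..L} - mu" by (simp add: missing_parts_def L_def)
  show "card mu + card (missing_parts mu) = Max mu"
    using card_Diff_subset[OF fin sub] card_mono[OF _ sub] by (simp add: M L_def[symmetric])
  define f where "f = (\<lambda>x. min x (L - x))"
  have inj: "inj_on f (missing_parts mu)"
  proof (rule inj_onI)
    fix x y assume x: "x \<in> missing_parts mu" and y: "y \<in> missing_parts mu" and e: "f x = f y"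
    show "x = y"
    proof (rule ccontr)
      assume ne: "x \<noteq> y"
      have "x \<le> L" "y \<le> L" using x y by (auto simp: M)
      then have "x + y = L" using e ne by (auto simp: f_def min_def split: if_splits)
      then show False using nr x y ne LL by (auto simp: refinable_def)
    qed
  qed
  have img: "f ` missing_parts mu \<subseteq> {1..L div 2}"
  proof
    fix z assume "z \<in> f ` missing_parts mu"
    then obtain x where x: "x \<in> missing_parts mu" "z = f x" by auto
    then have "1 \<le> x" "x < L" using LL by (auto simp: M) (metis le_neq_implies_less)
    then show "z \<in> {1..L div 2}" using x by (auto simp: f_def min_def)
  qed
  show "card (missing_parts mu) \<le> Max mu div 2"
    using card_mono[OF _ img] card_image[OF inj] by (simp add: L_def)
qed

lemma sum_lower:
  assumes dp: "distinct_partition N mu"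
  shows "2 * Max mu + (card mu - 1) * card mu \<le> 2 * N"
proof -
  have fin: "finite mu" and z: "0 \<notin> mu" and c2: "card mu \<ge> 2" and s: "\<Sum>mu = N"
    using dp by (auto simp: distinct_partition_def)
  have ne: "mu \<noteq> {}" using c2 by auto
  have LL: "Max mu \<in> mu" using fin ne by simp
  have "card (mu - {Max mu}) * (card (mu - {Max mu}) + 1) \<le> 2 * \<Sum>(mu - {Max mu})"
    by (rule sum_lb) (use fin z in auto)
  moreover have "card (mu - {Max mu}) = card mu - 1" using fin LL by simp
  moreover have "\<Sum>mu = Max mu + \<Sum>(mu - {Max mu})"
    using fin LL by (metis add.commute sum.remove)
  ultimately show ?thesis using s c2 by (simp add: algebra_simps)
qed



lemma gsum: "2 * \<Sum>{1..m::nat} = m * (m+1)"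
  by (induction m) (auto simp: atLeastAtMostSuc_conv)

lemma lin1: fixes s S Q P t j m :: nat shows "s + (j+m+5) = S + (9*j+4*m+36) \<Longrightarrow> 2*S = Q \<Longrightarrow> t = P - 2*(m+3) \<Longrightarrow> P = Q + 16*j+8*m+68 \<Longrightarrow> 2*s = t"
  by simp

lemma lin2: fixes A B R P N L n j m x :: nat shows "A \<le> B \<Longrightarrow> A = R \<Longrightarrow> 2*n-3 = 4*j+2*m+17 \<Longrightarrow> 2*L + B \<le> 2*N \<Longrightarrow> 2*n-3 \<le> L \<Longrightarrow> 2*N = x \<Longrightarrow> x = P - 2*(m+3) \<Longrightarrow> P = R + 4*(2*j+m)+38 \<Longrightarrow> False"
  by simp

lemma lin3: fixes c A R P N v x j m :: nat shows "2*c + A = 2*N \<Longrightarrow> A = R \<Longrightarrow> P = R + 6*(2*j+m)+54 \<Longrightarrow> v = 6*j+2*m+24 \<Longrightarrow> 2*N = x \<Longrightarrow> x = P - 2*(m+3) \<Longrightarrow> c = v"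
  by simp

lemma arith_ref: fixes a b j m :: nat
  assumes "a = j+m+5 \<or> 2*j+m+6 < a" "b = j+m+5 \<or> 2*j+m+6 < b" "a \<noteq> 2*j+m+9" "a \<noteq> 3*j+m+11" "b \<noteq> 2*j+m+9" "b \<noteq> 3*j+m+11" "a \<noteq> b"
   "a + b \<le> 2*j+m+6 \<or> a + b = 2*j+m+9 \<or> a + b = 3*j+m+11 \<or> a + b = 4*j+2*m+16"
  shows False
  using assms apply - by (elim disjE; linarith)

lemma witness:
  fixes n k :: nat
  assumes k4: "4 \<le> k" and kn: "2 * k + 2 \<le> n"
  defines "mu0 \<equiv> ({1..n-4} - {n-1-k}) \<union> {n-1, n-3+k, 2*n-4}"
  shows "Max mu0 = 2*n-4" and "distinct_partition (Tnd n (n - 2 * k + 1)) mu0" and "\<not> refinable mu0"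
proof -
  have fin: "finite mu0" by (simp add: mu0_def)
  show mx: "Max mu0 = 2*n-4"
    by (rule Max_eqI) (use kn k4 in \<open>auto simp: mu0_def\<close>)
  have disj: "({1..n-4} - {n-1-k}) \<inter> {n-1, n-3+k, 2*n-4} = {}" using kn k4 by auto
  have s3: "\<Sum>{n-1, n-3+k, 2*n-4} = (n-1) + (n-3+k) + (2*n-4)"
  proof -
    have d: "n-1 \<noteq> n-3+k" "n-1 \<noteq> 2*n-4" "n-3+k \<noteq> 2*n-4" using kn k4 by auto
    then show ?thesis by simp
  qed
  obtain m where m: "n = 2*k+2+m" using kn by (metis le_add_diff_inverse)
  obtain j where j: "k = j+4" using k4 by (metis add.commute le_add_diff_inverse)
  have g: "2 * \<Sum>{1..n-4} = (2*j+m+6)*(2*j+m+7)"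
    using gsum[of "n-4"] unfolding m j by (simp add: add.commute)
  have s1: "\<Sum>({1..n-4} - {n-1-k}) = \<Sum>{1..n-4} - (n-1-k)"
  proof -
    have mem: "n-1-k \<in> {1..n-4}" using kn k4 by auto
    show ?thesis using mem sum_diff1_nat[of "\<lambda>x. x" "{1..n-4}" "n-1-k"] by simp
  qed
  have s1': "n-1-k \<le> \<Sum>{1..n-4}"
    using kn k4 by (intro member_le_sum[where f="\<lambda>x. x", simplified]) auto
  have sm: "\<Sum>mu0 + (n-1-k) = \<Sum>{1..n-4} + ((n-1) + (n-3+k) + (2*n-4))"
  proof -
    have "\<Sum>mu0 = \<Sum>({1..n-4} - {n-1-k}) + \<Sum>{n-1, n-3+k, 2*n-4}"
      unfolding mu0_def by (rule sum.union_disjoint) (simp, simp, rule disj)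
    then show ?thesis using s1 s1' s3 by linarith
  qed
  have T2: "2 * T n = n * (n+1)" by (simp add: T_def)
  have Tn: "2 * Tnd n (n - 2 * k + 1) = n * (n+1) - 2 * (n - 2 * k + 1)"
    using T2 by (simp add: Tnd_def)
  have e0: "n-1-k = j+m+5" "(n-1) + (n-3+k) + (2*n-4) = 9*j+4*m+36" unfolding m j by simp_all
  have sm': "\<Sum>mu0 + (j+m+5) = \<Sum>{1..n-4} + (9*j+4*m+36)" using sm unfolding e0 .
  have Tn': "2 * Tnd n (n - 2 * k + 1) = (2*j+m+10)*(2*j+m+11) - 2*(m+3)"
    using Tn unfolding m j by (simp add: algebra_simps)
  have e2: "(2*j+m+10)*(2*j+m+11) = (2*j+m+6)*(2*j+m+7) + 16*j + 8*m + 68"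
    by (simp add: algebra_simps)
  have "2 * \<Sum>mu0 = 2 * Tnd n (n - 2 * k + 1)"
    by (rule lin1[OF sm' g Tn' e2])
  then have sumeq: "\<Sum>mu0 = Tnd n (n - 2 * k + 1)" by simp
  have c3: "card {n-1, n-3+k, 2*n-4} = 3" unfolding m j by simp
  have sub3: "{n-1, n-3+k, 2*n-4} \<subseteq> mu0" unfolding mu0_def by (rule Un_upper2)
  have c2: "card mu0 \<ge> 2" using card_mono[OF fin sub3] c3 by linarith
  have z: "0 \<notin> mu0" unfolding mu0_def using kn k4 by auto
  show "distinct_partition (Tnd n (n - 2 * k + 1)) mu0"
    unfolding distinct_partition_def using fin z sumeq c2 by blast
  show "\<not> refinable mu0"
  proof
    assume "refinable mu0"
    then obtain a b where a: "a \<in> missing_parts mu0" and b: "b \<in> missing_parts mu0" and ab: "a \<noteq> b" "a + b \<in> mu0"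
      by (auto simp: refinable_def)
    have eqs: "n-1-k = j+m+5" "n-1 = 2*j+m+9" "n-3+k = 3*j+m+11" "2*n-4 = 4*j+2*m+16" "n-4 = 2*j+m+6"
      unfolding m j by simp_all
    have mu0': "mu0 = ({1..2*j+m+6} - {j+m+5}) \<union> {2*j+m+9, 3*j+m+11, 4*j+2*m+16}"
      unfolding mu0_def eqs(1) unfolding eqs(2-5) ..
    have mx': "Max mu0 = 4*j+2*m+16" using mx unfolding eqs .
    have a': "1 \<le> a" "a \<le> 4*j+2*m+16" "a \<notin> mu0" using a unfolding missing_parts_def mx' by auto
    have b': "1 \<le> b" "b \<le> 4*j+2*m+16" "b \<notin> mu0" using b unfolding missing_parts_def mx' by auto
    have am: "a = j+m+5 \<or> 2*j+m+6 < a" using a'(1,3) unfolding mu0' by auto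
    have bm: "b = j+m+5 \<or> 2*j+m+6 < b" using b'(1,3) unfolding mu0' by auto
    have an: "a \<noteq> 2*j+m+9" "a \<noteq> 3*j+m+11" using a'(3) unfolding mu0' by auto
    have bn: "b \<noteq> 2*j+m+9" "b \<noteq> 3*j+m+11" using b'(3) unfolding mu0' by auto
    have "a + b \<le> 2*j+m+6 \<or> a + b = 2*j+m+9 \<or> a + b = 3*j+m+11 \<or> a + b = 4*j+2*m+16"
      using ab(2) unfolding mu0' by auto
    then show False by (rule arith_ref[OF am bm an bn ab(1)])
  qed
qed


theorem proposition5p1:
  fixes n k :: nat and lam :: "nat set"
  assumes "8 \<le> 2 * k" and "2 * k \<le> n - 2"
    and "lam \<in> maximal_unrefinable_bar (Tnd n (n - 2 * k + 1))"
  shows "card (KN (S_of lam)) = 2 * n - 4 + 2 * k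
    \<and> (\<Sum>c \<in> main_diagonal (KN (S_of lam)). hook_length (KN (S_of lam)) c) = 2 * n - 4 + 2 * k"
proof -
  define N where "N = Tnd n (n - 2 * k + 1)"
  define U where "U = unrefinable_parts N"
  have k4: "4 \<le> k" and kn: "2 * k + 2 \<le> n" using assms(1,2) by auto
  obtain m where m: "n = 2*k+2+m" using kn by (metis le_add_diff_inverse)
  obtain j where j: "k = j+4" using k4 by (metis add.commute le_add_diff_inverse)
  have lamU: "lam \<in> U" and maxeq: "Max lam = (MAX mu\<in>U. Max mu)"
    and cm: "card (missing_parts lam) = Max lam div 2"
    using assms(3) by (auto simp: maximal_unrefinable_bar_def maximal_unrefinable_def U_def N_def)
  have T2: "2 * T n = n * (n+1)" by (simp add: T_def)
  have Tn: "2 * N = n * (n+1) - 2 * (n - 2 * k + 1)"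
    using T2 by (simp add: Tnd_def N_def)
  have e1: "n * (n+1) - 2 * (n - 2 * k + 1) = (2*j+m+10)*(2*j+m+11) - 2*(m+3)"
    unfolding m j by (simp add: algebra_simps)
  have e3: "(2*j+m+10)*(2*j+m+11) = (2*j+m+8)*(2*j+m+9) + 4*(2*j+m) + 38"
    by (simp add: algebra_simps)
  have bound: "Max mu \<le> 2*n-4" if mu: "mu \<in> U" for mu
  proof (rule ccontr)
    assume "\<not> Max mu \<le> 2*n-4"
    then have L: "2*n-3 \<le> Max mu" by simp
    have dp: "distinct_partition N mu" and nr: "\<not> refinable mu" using mu by (auto simp: U_def unrefinable_parts_def)
    have c1: "card (missing_parts mu) \<le> Max mu div 2" and c2: "card mu + card (missing_parts mu) = Max mu"
      using missing_card[OF dp nr] by auto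
    have t: "n - 1 \<le> card mu" using c1 c2 L by linarith
    have sl: "2 * Max mu + (card mu - 1) * card mu \<le> 2 * N" by (rule sum_lower[OF dp])
    have "(n-2)*(n-1) \<le> (card mu - 1) * card mu" using t by (intro mult_le_mono) auto
    moreover have "(n-2)*(n-1) = (2*j+m+8)*(2*j+m+9)" unfolding m j by (simp add: algebra_simps)
    moreover have "2*n-3 = 4*j+2*m+17" unfolding m j by simp
    ultimately show False by (rule lin2[OF _ _ _ sl L Tn e1 e3])
  qed
  have wit: "Max ({1..n-4} - {n-1-k} \<union> {n-1, n-3+k, 2*n-4}) = 2*n-4"
    "({1..n-4} - {n-1-k} \<union> {n-1, n-3+k, 2*n-4}) \<in> U"
  proof -
    note w = witness[OF k4 kn]
    show "Max ({1..n-4} - {n-1-k} \<union> {n-1, n-3+k, 2*n-4}) = 2*n-4" by (rule w(1))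
    show "({1..n-4} - {n-1-k} \<union> {n-1, n-3+k, 2*n-4}) \<in> U"
      unfolding U_def N_def unrefinable_parts_def using w(2,3) by blast
  qed
  have MX: "(MAX mu\<in>U. Max mu) = 2*n-4"
  proof (rule Max_eqI)
    show "finite (Max ` U)" by (rule finite_subset[of _ "{..2*n-4}"]) (use bound in auto)
    show "\<And>y. y \<in> Max ` U \<Longrightarrow> y \<le> 2*n-4" using bound by auto
    show "2*n-4 \<in> Max ` U" using wit by (metis image_eqI)
  qed
  have Ml: "Max lam = 2*n-4" using maxeq MX by simp
  have dpl: "distinct_partition N lam" and nrl: "\<not> refinable lam" using lamU by (auto simp: U_def unrefinable_parts_def)
  have cl: "card lam = n - 2" using missing_card(2)[OF dpl nrl] cm Ml kn by simp
  have finl: "finite lam" and sl: "\<Sum>lam = N" using dpl by (auto simp: distinct_partition_def)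
  have kc: "2 * card (KN (S_of lam)) + (n-2) * (n-2-1) = 2 * N" using kn_card[OF finl] cl sl by simp
  have e4: "(n-2) * (n-2-1) = (2*j+m+8)*(2*j+m+7)" unfolding m j by (simp add: algebra_simps)
  have e5: "(2*j+m+10)*(2*j+m+11) = (2*j+m+8)*(2*j+m+7) + 6*(2*j+m) + 54" by (simp add: algebra_simps)
  have e6: "2 * n - 4 + 2 * k = 6*j + 2*m + 24" unfolding m j by simp
  have card: "card (KN (S_of lam)) = 2 * n - 4 + 2 * k"
    by (rule lin3[OF kc e4 e5 e6 Tn e1])
  have hs: "(\<Sum>c \<in> main_diagonal (KN (S_of lam)). hook_length (KN (S_of lam)) c) = card (KN (S_of lam))"
    by (rule hook_sum[OF kn_mono(2)[OF finl] kn_mono(1)[OF finl]])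
  show ?thesis using card hs by simp
qed

end
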